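(* Assume (A7) and (A8) of the context. Then for every $\delta\in\mathbb{R}^D$ with $\|\delta\|\le\|\theta^*\|$, with probability $1-\delta_{n_q}$, $\|\nabla^2_\theta\ell(\theta^*+\delta)\|\le 2C_{\mathrm{ratio}}D_{\max,2}$.
   Context: Let $E=\{(u,v):1\le v\le u\le m\}$, $D=b|E|$, $\psi:\mathbb{R}^2\to\mathbb{R}^b$, and $f:\mathbb{R}^m\to\mathbb{R}^D$ the concatenation of the blocks $f_t(x)=\psi(x_u,x_v)$, $t=(u,v)\in E$; $f_S$ is the subvector of blocks in $S\subseteq E$. $P,Q$ are distributions on $\mathbb{R}^m$ with densities $p,q$; samples $x_p^{(1..n_p)}$ i.i.d. $P$ and $x_q^{(1..n_q)}$ i.i.d. $Q$. $r(x;\theta)=\exp(\theta^\top f(x))/N(\theta)$, $N(\theta)=\mathbb{E}_Q[\exp(\theta^\top f(x))]$; $\hat N(\theta)=\frac1{n_q}\sum_i\exp(\theta^\top f(x_q^{(i)}))$; $\hat r(x;\theta)=\exp(\theta^\top f(x))/\hat N(\theta)$; $\ell(\theta)=-\frac1{n_p}\sum_i\theta^\top f(x_p^{(i)})+\log\hat N(\theta)$. $\theta^*$ is the true parameter ($p=q\,r(\cdot;\theta^* )$), $S=\{t:\theta^*_t\neq0\}$. $\|\cdot\|$: Euclidean norm on vectors, spectral norm on matrices; $\Lambda_{\min}$ smallest eigenvalue. (A7) For all $\delta$ with $\|\delta\|\le\|\theta^*\|$ and all $x$: $0<C_{\min}\le r(x;\theta^*+\delta)\le C_{\max}<\infty$;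 moreover $\frac1{C_{\mathrm{ratio}}}\le\hat r(x;\theta^*+\delta)\le C_{\mathrm{ratio}}$ and $\|f_t(x)\|\le C_{f_t,\max}$ for constants. (A8) With probability 1: $\max_{t\in E}\frac1{n_q}\sum_i\|f_t(x_q^{(i)})\|\le D_{\max,1}<\infty$, $\|\frac1{n_q}\sum_if(x_q^{(i)})f(x_q^{(i)})^\top\|\le D_{\max,2}$ and $\|\widehat{\mathrm{Cov}}_q[f]\|\le D_{\max,2}<\infty$; with probability $1-\delta_{n_q}$, $\Lambda_{\min}(\widehat{\mathrm{Cov}}_q[f_S])\ge D_{\min,2}>0$; $\widehat{\mathrm{Cov}}_q$ is the sample covariance over the $Q$-sample. *)

theory Defs
  imports "HOL-Probability.Probability"
begin

definition Eset :: "('m::linorder \<times> 'm) set" where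
  "Eset = {(u, v). v \<le> u}"

definition fblock :: "(real \<Rightarrow> real \<Rightarrow> real^'b) \<Rightarrow> ('m \<times> 'm) \<Rightarrow> real^'m \<Rightarrow> real^'b" where
  "fblock psi t x = psi (x $ fst t) (x $ snd t)"

text \<open>Concatenated feature map f : R^m \<rightarrow> R^D; coordinate d of R^D is the
  coordinate snd (idx d) of the block fst (idx d) (idx is a bijection onto E \<times> 'b).\<close>
definition feat :: "(real \<Rightarrow> real \<Rightarrow> real^'b) \<Rightarrow> ('d \<Rightarrow> ('m \<times> 'm) \<times> 'b) \<Rightarrow> real^'m \<Rightarrow> real^'d" where
  "feat psi idx x = (\<chi> d. fblock psi (fst (idx d)) x $ snd (idx d))"

definition Npop :: "('x measure) \<Rightarrow> ('x \<Rightarrow> real^'d) \<Rightarrow> real^'d \<Rightarrow> real" where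
  "Npop Q f th = integral\<^sup>L Q (\<lambda>x. exp (th \<bullet> f x))"

definition rpop :: "('x measure) \<Rightarrow> ('x \<Rightarrow> real^'d) \<Rightarrow> real^'d \<Rightarrow> 'x \<Rightarrow> real" where
  "rpop Q f th x = exp (th \<bullet> f x) / Npop Q f th"

definition Nhat :: "('x \<Rightarrow> real^'d) \<Rightarrow> (nat \<Rightarrow> 'x) \<Rightarrow> nat \<Rightarrow> real^'d \<Rightarrow> real" where
  "Nhat f xs n th = (\<Sum>i<n. exp (th \<bullet> f (xs i))) / real n"

definition rhat :: "('x \<Rightarrow> real^'d) \<Rightarrow> (nat \<Rightarrow> 'x) \<Rightarrow> nat \<Rightarrow> real^'d \<Rightarrow> 'x \<Rightarrow> real" where
  "rhat f xs n th x = exp (th \<bullet> f x) / Nhat f xs n th"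

definition ell :: "('x \<Rightarrow> real^'d) \<Rightarrow> (nat \<Rightarrow> 'x) \<Rightarrow> nat \<Rightarrow> (nat \<Rightarrow> 'x) \<Rightarrow> nat \<Rightarrow> real^'d \<Rightarrow> real" where
  "ell f xp np xq nq th = - (\<Sum>i<np. th \<bullet> f (xp i)) / real np + ln (Nhat f xq nq th)"

definition partial_deriv :: "(real^'d \<Rightarrow> real) \<Rightarrow> 'd \<Rightarrow> real^'d \<Rightarrow> real" where
  "partial_deriv g i th = deriv (\<lambda>t. g (th + t *\<^sub>R axis i 1)) 0"

definition hessian :: "(real^'d \<Rightarrow> real) \<Rightarrow> real^'d \<Rightarrow> real^'d^'d" where
  "hessian g th = (\<chi> i j. partial_deriv (\<lambda>eta. partial_deriv g j eta) i th)"

definition specnorm :: "real^'n^'n \<Rightarrow> real" where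
  "specnorm A = onorm (\<lambda>x. A *v x)"

definition outer :: "real^'n \<Rightarrow> real^'n \<Rightarrow> real^'n^'n" where
  "outer u v = (\<chi> i j. u $ i * v $ j)"

definition smean :: "('x \<Rightarrow> real^'d) \<Rightarrow> (nat \<Rightarrow> 'x) \<Rightarrow> nat \<Rightarrow> real^'d" where
  "smean f xs n = (1 / real n) *\<^sub>R (\<Sum>k<n. f (xs k))"

definition smom :: "('x \<Rightarrow> real^'d) \<Rightarrow> (nat \<Rightarrow> 'x) \<Rightarrow> nat \<Rightarrow> real^'d^'d" where
  "smom f xs n = (1 / real n) *\<^sub>R (\<Sum>k<n. outer (f (xs k)) (f (xs k)))"

definition scov :: "('x \<Rightarrow> real^'d) \<Rightarrow> (nat \<Rightarrow> 'x) \<Rightarrow> nat \<Rightarrow> real^'d^'d" where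
  "scov f xs n = (1 / real n) *\<^sub>R
     (\<Sum>k<n. outer (f (xs k) - smean f xs n) (f (xs k) - smean f xs n))"

definition sub_eigenvalues :: "real^'n^'n \<Rightarrow> 'n set \<Rightarrow> real set" where
  "sub_eigenvalues A J = {c. \<exists>v. v \<noteq> 0 \<and> (\<forall>i. i \<notin> J \<longrightarrow> v $ i = 0) \<and>
                               (\<forall>i\<in>J. (A *v v) $ i = c * v $ i)}"

definition lambda_min_sub :: "real^'n^'n \<Rightarrow> 'n set \<Rightarrow> real" where
  "lambda_min_sub A J = Inf (sub_eigenvalues A J)"

end

theory Submission
  imports Defs
begin

lemma vecI: "(\<And>i. x $ i = y $ i) \<Longrightarrow> x = y" by (simp add: vec_eq_iff)

definition Zs :: "(nat \<Rightarrow> real^'d) \<Rightarrow> nat \<Rightarrow> real^'d \<Rightarrow> real" where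
  "Zs ys n th = (\<Sum>k<n. exp (th \<bullet> ys k))"

lemma Zs_pos: "0 < n \<Longrightarrow> 0 < Zs ys n th"
  unfolding Zs_def by (intro sum_pos) auto

lemma shift_inner: "(eta + t *\<^sub>R axis j 1) \<bullet> y = eta \<bullet> y + t * (y $ j)"
  by (simp add: inner_add_left inner_axis')

lemma pd_ell:
  assumes "0 < nq"
  shows "partial_deriv (ell f xp np xq nq) j eta =
     - (\<Sum>i<np. f (xp i) $ j) / real np +
     (\<Sum>k<nq. exp (eta \<bullet> f (xq k)) * f (xq k) $ j) / Zs (\<lambda>k. f (xq k)) nq eta"
proof -
  let ?Z = "\<lambda>t. (\<Sum>k<nq. exp (eta \<bullet> f (xq k) + t * f (xq k) $ j))"
  have eq: "(\<lambda>t. ell f xp np xq nq (eta + t *\<^sub>R axis j 1)) =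
    (\<lambda>t. (- 1 / real np) * (\<Sum>i<np. eta \<bullet> f (xp i) + t * f (xp i) $ j) + ln (?Z t / real nq))"
    by (simp add: ell_def Nhat_def shift_inner)
  have Zpos: "0 < ?Z t" for t using assms by (intro sum_pos) auto
  have d: "((\<lambda>t. (- 1 / real np) * (\<Sum>i<np. eta \<bullet> f (xp i) + t * f (xp i) $ j) + ln (?Z t / real nq))
     has_real_derivative
      (- (\<Sum>i<np. f (xp i) $ j) / real np +
     (\<Sum>k<nq. exp (eta \<bullet> f (xq k)) * f (xq k) $ j) / Zs (\<lambda>k. f (xq k)) nq eta)) (at 0)"
    using assms Zpos[of 0]
    by (cases "np = 0") (auto intro!: derivative_eq_intros simp: Zs_def)
  show ?thesis unfolding partial_deriv_def eq by (rule DERIV_imp_deriv[OF d])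
qed

lemma hess_ell:
  fixes f :: "'x \<Rightarrow> real^'d" and xq :: "nat \<Rightarrow> 'x"
    and th :: "real^'d"
  assumes "0 < nq"
  defines "ys \<equiv> (\<lambda>k. f (xq k))"
  defines "w \<equiv> (\<lambda>k. exp (th \<bullet> ys k) / Zs ys nq th)"
  shows "hessian (ell f xp np xq nq) th $ i $ j =
     (\<Sum>k<nq. w k * ys k $ i * ys k $ j) - (\<Sum>k<nq. w k * ys k $ i) * (\<Sum>k<nq. w k * ys k $ j)"
proof -
  let ?Z = "\<lambda>t. (\<Sum>k<nq. exp (th \<bullet> ys k + t * ys k $ i))"
  let ?U = "\<lambda>t. (\<Sum>k<nq. exp (th \<bullet> ys k + t * ys k $ i) * ys k $ j)"
  have eq: "(\<lambda>t. partial_deriv (ell f xp np xq nq) j (th + t *\<^sub>R axis i 1)) =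
    (\<lambda>t. - (\<Sum>i<np. f (xp i) $ j) / real np + ?U t / ?Z t)"
    by (simp add: pd_ell[OF assms(1)] Zs_def shift_inner ys_def)
  have Zpos: "0 < ?Z t" for t using assms by (intro sum_pos) auto
  have Z0: "?Z 0 = Zs ys nq th" by (simp add: Zs_def)
  have d: "((\<lambda>t. - (\<Sum>i<np. f (xp i) $ j) / real np + ?U t / ?Z t) has_real_derivative
     ((\<Sum>k<nq. exp (th \<bullet> ys k) * ys k $ i * ys k $ j) * ?Z 0 - ?U 0 * (\<Sum>k<nq. exp (th \<bullet> ys k) * ys k $ i)) / (?Z 0 * ?Z 0)) (at 0)"
    using Zpos[of 0]
    by (auto intro!: derivative_eq_intros simp: power2_eq_square algebra_simps)
  have "hessian (ell f xp np xq nq) th $ i $ j =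
     ((\<Sum>k<nq. exp (th \<bullet> ys k) * ys k $ i * ys k $ j) * ?Z 0 - ?U 0 * (\<Sum>k<nq. exp (th \<bullet> ys k) * ys k $ i)) / (?Z 0 * ?Z 0)"
    unfolding hessian_def partial_deriv_def[of "\<lambda>eta. partial_deriv _ j eta"] 
    using DERIV_imp_deriv[OF d] eq by (simp add: partial_deriv_def)
  also have "\<dots> = (\<Sum>k<nq. w k * ys k $ i * ys k $ j) - (\<Sum>k<nq. w k * ys k $ i) * (\<Sum>k<nq. w k * ys k $ j)"
    using Zpos[of 0] unfolding Z0 w_def
    by (simp add: sum_divide_distrib[symmetric] field_simps)
  finally show ?thesis .
qed

lemma wCS:
  assumes "\<And>k. 0 \<le> (w k::real)"
  shows "(\<Sum>k\<in>I. w k * a k * b k)^2 \<le> (\<Sum>k\<in>I. w k * (a k)^2) * (\<Sum>k\<in>I. w k * (b k)^2)"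
proof -
  have 1: "(sqrt (w k) * a k) * (sqrt (w k) * b k) = w k * a k * b k" for k
  proof -
    have "(sqrt (w k) * a k) * (sqrt (w k) * b k) = (sqrt (w k) * sqrt (w k)) * a k * b k" by (simp only: ac_simps)
    also have "sqrt (w k) * sqrt (w k) = w k" using assms[of k] by simp
    finally show ?thesis .
  qed
  have 2: "(sqrt (w k) * c)^2 = w k * c^2" for k c
    using assms[of k] by (simp add: power_mult_distrib)
  have "(\<Sum>k\<in>I. (sqrt (w k) * a k) * (sqrt (w k) * b k))^2
     \<le> (\<Sum>k\<in>I. (sqrt (w k) * a k)^2) * (\<Sum>k\<in>I. (sqrt (w k) * b k)^2)"
    by (rule Cauchy_Schwarz_ineq_sum)
  then show ?thesis by (simp only: 1 2)
qed

lemma sq_bound_imp: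
  fixes a b :: real
  assumes "a^2 \<le> c * b * a" "0 \<le> a" "0 \<le> c" "0 \<le> b"
  shows "a \<le> c * b"
proof (cases "a = 0")
  case False
  then have "a > 0" using assms by simp
  then show ?thesis using assms(1) by (simp add: power2_eq_square)
qed (use assms in auto)

lemma sum_cfac: "(\<Sum>j\<in>A. (c::real) * d j * e j) = c * (\<Sum>j\<in>A. d j * e j)"
  by (simp add: sum_distrib_left mult.assoc)

lemma Hx_comp:
  fixes ys :: "nat \<Rightarrow> real^'d" and w :: "nat \<Rightarrow> real"
  shows "((\<chi> i j. (\<Sum>k<n. w k * ys k $ i * ys k $ j) - (\<Sum>k<n. w k * ys k $ i) * (\<Sum>k<n. w k * ys k $ j)) *v x) $ i
     = (\<Sum>k<n. (w k * (ys k \<bullet> x)) *\<^sub>R ys k) $ i - ((\<Sum>k<n. w k *\<^sub>R ys k) \<bullet> x) * (\<Sum>k<n. w k *\<^sub>R ys k) $ i"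
proof -
  have a: "(\<Sum>j\<in>UNIV. (\<Sum>k<n. w k * ys k $ i * ys k $ j) * x $ j) = (\<Sum>k<n. w k * (ys k \<bullet> x) * ys k $ i)"
    by (simp add: inner_vec_def sum_distrib_left sum_distrib_right sum.swap[where A=UNIV] mult_ac)
  have b: "(\<Sum>j\<in>UNIV. (\<Sum>k<n. w k * ys k $ i) * (\<Sum>k<n. w k * ys k $ j) * x $ j)
     = ((\<Sum>k<n. w k *\<^sub>R ys k) \<bullet> x) * (\<Sum>k<n. w k * ys k $ i)"
  proof -
    have "(\<Sum>j\<in>UNIV. (\<Sum>k<n. w k * ys k $ i) * (\<Sum>k<n. w k * ys k $ j) * x $ j)
       = (\<Sum>k<n. w k * ys k $ i) * (\<Sum>j\<in>UNIV. (\<Sum>k<n. w k * ys k $ j) * x $ j)"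
      by (rule sum_cfac)
    also have "(\<Sum>j\<in>UNIV. (\<Sum>k<n. w k * ys k $ j) * x $ j) = (\<Sum>k<n. w k *\<^sub>R ys k) \<bullet> x"
      by (simp add: inner_vec_def)
    finally show ?thesis by simp
  qed
  show ?thesis
    by (simp add: matrix_vector_mult_def left_diff_distrib sum_subtractf a b)
qed

lemma mat_bound:
  fixes ys :: "nat \<Rightarrow> real^'d" and w :: "nat \<Rightarrow> real"
  assumes w0: "\<And>k. 0 \<le> w k" and w1: "(\<Sum>k<n. w k) = 1" and c0: "0 \<le> c"
    and q: "\<And>x. (\<Sum>k<n. w k * (ys k \<bullet> x)^2) \<le> c * (norm x)^2"
  shows "norm ((\<chi> i j. (\<Sum>k<n. w k * ys k $ i * ys k $ j) - (\<Sum>k<n. w k * ys k $ i) * (\<Sum>k<n. w k * ys k $ j)) *v x)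
     \<le> 2 * c * norm x"
proof -
  define m where "m = (\<Sum>k<n. w k *\<^sub>R ys k)"
  define Bx where "Bx = (\<Sum>k<n. (w k * (ys k \<bullet> x)) *\<^sub>R ys k)"
  have Hx: "(\<chi> i j. (\<Sum>k<n. w k * ys k $ i * ys k $ j) - (\<Sum>k<n. w k * ys k $ i) * (\<Sum>k<n. w k * ys k $ j)) *v x
     = Bx - (m \<bullet> x) *\<^sub>R m"
    unfolding Bx_def m_def
  proof (rule vecI)
    fix i show "((\<chi> i j. (\<Sum>k<n. w k * ys k $ i * ys k $ j) - (\<Sum>k<n. w k * ys k $ i) * (\<Sum>k<n. w k * ys k $ j)) *v x) $ i
     = ((\<Sum>k<n. (w k * (ys k \<bullet> x)) *\<^sub>R ys k) - ((\<Sum>k<n. w k *\<^sub>R ys k) \<bullet> x) *\<^sub>R (\<Sum>k<n. w k *\<^sub>R ys k)) $ i"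
      using Hx_comp[where w=w and ys=ys and x=x and i=i and n=n] by simp
  qed
  have mx: "(m \<bullet> y)^2 \<le> c * (norm y)^2" for y
  proof -
    have e: "m \<bullet> y = (\<Sum>k<n. w k * 1 * (ys k \<bullet> y))" unfolding m_def by (simp add: inner_sum_left)
    have "(m \<bullet> y)^2 \<le> (\<Sum>k<n. w k * 1^2) * (\<Sum>k<n. w k * (ys k \<bullet> y)^2)"
      unfolding e by (rule wCS[where w=w]) (rule w0)
    also have "\<dots> \<le> c * (norm y)^2" using q[of y] w1 by simp
    finally show ?thesis .
  qed
  have nm: "norm m \<le> sqrt c"
  proof -
    have "((norm m)^2)^2 \<le> c * (norm m)^2" using mx[of m] unfolding power2_norm_eq_inner[symmetric] .
    then have "((norm m)^2)^2 \<le> c * 1 * (norm m)^2" by simp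
    then have "(norm m)^2 \<le> c * 1"
      by (rule sq_bound_imp) (simp_all add: c0)
    then show ?thesis by (intro real_le_rsqrt) simp
  qed
  have nmx: "abs (m \<bullet> x) \<le> sqrt c * norm x"
  proof -
    have "abs (m \<bullet> x) = sqrt ((m \<bullet> x)^2)" by simp
    also have "\<dots> \<le> sqrt (c * (norm x)^2)" using mx[of x] by (rule real_sqrt_le_mono)
    also have "\<dots> = sqrt c * norm x" by (simp add: real_sqrt_mult)
    finally show ?thesis .
  qed
  have t2: "norm ((m \<bullet> x) *\<^sub>R m) \<le> c * norm x"
  proof -
    have "norm ((m \<bullet> x) *\<^sub>R m) = abs (m \<bullet> x) * norm m" by simp
    also have "\<dots> \<le> (sqrt c * norm x) * sqrt c" by (intro mult_mono nmx nm) (auto simp: c0)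
    also have "\<dots> = (sqrt c * sqrt c) * norm x" by (simp only: ac_simps)
    also have "\<dots> = c * norm x" using c0 by simp
    finally show ?thesis .
  qed
  have Bxy: "Bx \<bullet> y = (\<Sum>k<n. w k * (ys k \<bullet> x) * (ys k \<bullet> y))" for y
    unfolding Bx_def by (simp add: inner_sum_left)
  have t1: "norm Bx \<le> c * norm x"
  proof -
    have "(norm Bx)^2 = Bx \<bullet> Bx" by (simp add: power2_norm_eq_inner)
    also have "\<dots> = (\<Sum>k<n. w k * (ys k \<bullet> x) * (ys k \<bullet> Bx))"
      using Bxy[of Bx] .
    finally have e: "(norm Bx)^2 = (\<Sum>k<n. w k * (ys k \<bullet> x) * (ys k \<bullet> Bx))" .
    have "((norm Bx)^2)^2 \<le> (\<Sum>k<n. w k * (ys k \<bullet> x)^2) * (\<Sum>k<n. w k * (ys k \<bullet> Bx)^2)"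
      unfolding e by (rule wCS[where w=w]) (rule w0)
    also have "\<dots> \<le> (c * (norm x)^2) * (c * (norm Bx)^2)"
      by (intro mult_mono q) (simp_all add: c0 sum_nonneg w0)
    also have "\<dots> = (c * norm x * norm Bx)^2" by (simp add: power_mult_distrib power2_eq_square)
    finally have "(norm Bx)^2 \<le> c * norm x * norm Bx"
      by (rule power2_le_imp_le) (simp add: c0)
    then have "(norm Bx)^2 \<le> c * norm x * norm Bx" .
    then show ?thesis using sq_bound_imp[of "norm Bx" c "norm x"] c0 by simp
  qed
  have "norm (Bx - (m \<bullet> x) *\<^sub>R m) \<le> norm Bx + norm ((m \<bullet> x) *\<^sub>R m)" by (rule norm_triangle_ineq4)
  also have "\<dots> \<le> 2 * c * norm x" using t1 t2 by simp
  finally show ?thesis unfolding Hx .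
qed

lemma smom_quad:
  fixes f :: "'x \<Rightarrow> real^'d"
  shows "x \<bullet> (smom f xs n *v x) = (1 / real n) * (\<Sum>k<n. (f (xs k) \<bullet> x)^2)"
proof -
  have "smom f xs n *v x = (1 / real n) *\<^sub>R (\<Sum>k<n. (f (xs k) \<bullet> x) *\<^sub>R f (xs k))"
  proof (rule vecI)
    fix i
    have "(smom f xs n *v x) $ i = (\<Sum>j\<in>UNIV. (1 / real n) * (\<Sum>k<n. f (xs k) $ i * f (xs k) $ j) * x $ j)"
      by (simp add: smom_def matrix_vector_mult_def outer_def sum_component)
    also have "\<dots> = (1 / real n) * (\<Sum>j\<in>UNIV. (\<Sum>k<n. f (xs k) $ i * f (xs k) $ j) * x $ j)"
      by (rule sum_cfac)
    also have "(\<Sum>j\<in>UNIV. (\<Sum>k<n. f (xs k) $ i * f (xs k) $ j) * x $ j) = (\<Sum>k<n. (f (xs k) \<bullet> x) * f (xs k) $ i)"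
      by (simp add: inner_vec_def sum_distrib_left sum_distrib_right sum.swap[where A=UNIV] mult_ac)
    finally show "(smom f xs n *v x) $ i = ((1 / real n) *\<^sub>R (\<Sum>k<n. (f (xs k) \<bullet> x) *\<^sub>R f (xs k))) $ i"
      by (simp add: sum_component)
  qed
  then show ?thesis by (simp add: inner_sum_right power2_eq_square inner_commute)
qed

theorem proposition5:
  fixes M :: "'w measure"
    and psi :: "real \<Rightarrow> real \<Rightarrow> real^'b::finite"
    and p q :: "(real, 'm::{finite,linorder}) vec \<Rightarrow> real"
    and idx :: "'d::finite \<Rightarrow> ('m \<times> 'm) \<times> 'b"
    and xp xq :: "nat \<Rightarrow> 'w \<Rightarrow> (real, 'm) vec"
    and np nq :: nat
    and thetas :: "real^'d"
    and Cmin Cmax Cratio Dmax1 Dmax2 Dmin2 delta_nq :: real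
    and Cf :: "'m \<times> 'm \<Rightarrow> real"
  defines "f \<equiv> feat psi idx"
    and "Q \<equiv> density lborel (\<lambda>x. ennreal (q x))"
    and "S \<equiv> {t \<in> Eset. \<exists>d. fst (idx d) = t \<and> thetas $ d \<noteq> 0}"
    and "J \<equiv> {d. fst (idx d) \<in> {t \<in> Eset. \<exists>d'. fst (idx d') = t \<and> thetas $ d' \<noteq> 0}}"
  assumes "prob_space M"
    and "bij_betw idx UNIV (Eset \<times> UNIV)"
    and "0 < np" and "0 < nq"
    and "\<forall>x. 0 \<le> p x" and "\<forall>x. 0 \<le> q x"
    and "\<forall>i<np. distributed M lborel (xp i) (\<lambda>x. ennreal (p x))"
    and "\<forall>i<nq. distributed M lborel (xq i) (\<lambda>x. ennreal (q x))"
    and "prob_space.indep_vars M (\<lambda>_. borel) (case_sum xp xq) (Inl ` {..<np} \<union> Inr ` {..<nq})"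
    and "\<forall>x. p x = q x * rpop Q f thetas x"
    (* (A7) *)
    and "0 < Cmin"
    and "\<forall>\<delta> x. norm \<delta> \<le> norm thetas \<longrightarrow>
           Cmin \<le> rpop Q f (thetas + \<delta>) x \<and> rpop Q f (thetas + \<delta>) x \<le> Cmax"
    and "\<forall>\<omega>\<in>space M. \<forall>\<delta> x. norm \<delta> \<le> norm thetas \<longrightarrow>
           1 / Cratio \<le> rhat f (\<lambda>i. xq i \<omega>) nq (thetas + \<delta>) x \<and>
           rhat f (\<lambda>i. xq i \<omega>) nq (thetas + \<delta>) x \<le> Cratio"
    and "\<forall>t\<in>Eset. \<forall>x. norm (fblock psi t x) \<le> Cf t"
    (* (A8) *)
    and "AE \<omega> in M.
           (\<forall>t\<in>Eset. (\<Sum>i<nq. norm (fblock psi t (xq i \<omega>))) / real nq \<le> Dmax1) \<and>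
           specnorm (smom f (\<lambda>i. xq i \<omega>) nq) \<le> Dmax2 \<and>
           specnorm (scov f (\<lambda>i. xq i \<omega>) nq) \<le> Dmax2"
    and "0 < Dmin2"
    and "\<exists>A\<in>sets M. 1 - delta_nq \<le> measure M A \<and>
           (\<forall>\<omega>\<in>A. Dmin2 \<le> lambda_min_sub (scov f (\<lambda>i. xq i \<omega>) nq) J)"
  shows "\<forall>\<delta>::real^'d. norm \<delta> \<le> norm thetas \<longrightarrow>
           (\<exists>A\<in>sets M. 1 - delta_nq \<le> measure M A \<and>
             (\<forall>\<omega>\<in>A. specnorm (hessian (ell f (\<lambda>i. xp i \<omega>) np (\<lambda>i. xq i \<omega>) nq) (thetas + \<delta>))
                      \<le> 2 * Cratio * Dmax2))"
  proof (intro allI impI)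
  fix \<delta> :: "real^'d"
  assume nd: "norm \<delta> \<le> norm thetas"
  obtain A0 where A0: "A0 \<in> sets M" "1 - delta_nq \<le> measure M A0"
    using assms(21) by blast
  obtain N where N: "\<And>\<omega>. \<omega> \<in> space M - N \<Longrightarrow> (\<forall>t\<in>Eset. (\<Sum>i<nq. norm (fblock psi t (xq i \<omega>))) / real nq \<le> Dmax1) \<and>
           specnorm (smom f (\<lambda>i. xq i \<omega>) nq) \<le> Dmax2 \<and>
           specnorm (scov f (\<lambda>i. xq i \<omega>) nq) \<le> Dmax2" "N \<in> null_sets M"
    by (rule AE_E3[OF assms(19)]) blast
  define A where "A = A0 - N"
  have Asets: "A \<in> sets M" using A0 N(2) unfolding A_def by auto
  have mA: "measure M A = measure M A0" unfolding A_def using A0 N(2) by (simp add: measure_Diff_null_set)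
  show "\<exists>A\<in>sets M. 1 - delta_nq \<le> measure M A \<and>
             (\<forall>\<omega>\<in>A. specnorm (hessian (ell f (\<lambda>i. xp i \<omega>) np (\<lambda>i. xq i \<omega>) nq) (thetas + \<delta>))
                      \<le> 2 * Cratio * Dmax2)"
  proof (intro bexI[OF _ Asets] conjI ballI)
    show "1 - delta_nq \<le> measure M A" using mA A0 by simp
    fix \<omega> assume wA: "\<omega> \<in> A"
    have ws: "\<omega> \<in> space M" using wA Asets sets.sets_into_space by blast
    have smb: "specnorm (smom f (\<lambda>i. xq i \<omega>) nq) \<le> Dmax2" using wA N(1)[of \<omega>] ws unfolding A_def by blast
    have rb: "\<And>x. 1 / Cratio \<le> rhat f (\<lambda>i. xq i \<omega>) nq (thetas + \<delta>) x \<and>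
           rhat f (\<lambda>i. xq i \<omega>) nq (thetas + \<delta>) x \<le> Cratio"
      using assms(17) ws nd by blast
    define th where "th = thetas + \<delta>"
    define ys where "ys = (\<lambda>k. f (xq k \<omega>))"
    define w where "w = (\<lambda>k. exp (th \<bullet> ys k) / Zs ys nq th)"
    have nq: "0 < nq" by (rule assms(8))
    have Zp: "0 < Zs ys nq th" using Zs_pos[OF nq] .
    have Nh: "Nhat f (\<lambda>i. xq i \<omega>) nq th = Zs ys nq th / real nq"
      by (simp add: Nhat_def Zs_def ys_def)
    have rk: "rhat f (\<lambda>i. xq i \<omega>) nq th (xq k \<omega>) = real nq * w k" for k
      using nq Zp by (simp add: rhat_def Nh w_def ys_def)
    have Cpos: "0 < Cratio"
    proof -
      have "0 < rhat f (\<lambda>i. xq i \<omega>) nq th (xq 0 \<omega>)" unfolding rk w_def using nq Zp by simp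
      then show ?thesis using rb[of "xq 0 \<omega>"] unfolding th_def by linarith
    qed
    have D0: "0 \<le> Dmax2"
      using smb onorm_pos_le[OF matrix_vector_mul_bounded_linear] unfolding specnorm_def by (meson order_trans)
    have w0: "0 \<le> w k" for k unfolding w_def using Zp by simp
    have w1: "(\<Sum>k<nq. w k) = 1"
      unfolding w_def using Zp by (simp add: sum_divide_distrib[symmetric] Zs_def)
    have wle: "w k \<le> Cratio / real nq" for k
    proof -
      have "real nq * w k \<le> Cratio" using rb[of "xq k \<omega>"] rk[of k] unfolding th_def by simp
      then show ?thesis using nq by (simp add: field_simps)
    qed
    have q: "(\<Sum>k<nq. w k * (ys k \<bullet> x)^2) \<le> (Cratio * Dmax2) * (norm x)^2" for x
    proof -
      have "(\<Sum>k<nq. w k * (ys k \<bullet> x)^2) \<le> (\<Sum>k<nq. Cratio / real nq * (ys k \<bullet> x)^2)"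
        by (intro sum_mono mult_right_mono wle) simp
      also have "\<dots> = Cratio * (x \<bullet> (smom f (\<lambda>i. xq i \<omega>) nq *v x))"
        by (simp add: smom_quad ys_def sum_distrib_left)
      also have "\<dots> \<le> Cratio * (norm x * norm (smom f (\<lambda>i. xq i \<omega>) nq *v x))"
        using Cpos by (intro mult_left_mono norm_cauchy_schwarz) auto
      also have "\<dots> \<le> Cratio * (norm x * (Dmax2 * norm x))"
      proof -
        have "norm (smom f (\<lambda>i. xq i \<omega>) nq *v x) \<le> specnorm (smom f (\<lambda>i. xq i \<omega>) nq) * norm x"
          unfolding specnorm_def by (rule onorm[OF matrix_vector_mul_bounded_linear])
        also have "\<dots> \<le> Dmax2 * norm x" by (intro mult_right_mono smb) simp
        finally show ?thesis using Cpos by (intro mult_left_mono) auto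
      qed
      also have "\<dots> = (Cratio * Dmax2) * (norm x)^2" by (simp add: power2_eq_square)
      finally show ?thesis .
    qed
    have H: "hessian (ell f (\<lambda>i. xp i \<omega>) np (\<lambda>i. xq i \<omega>) nq) th =
      (\<chi> i j. (\<Sum>k<nq. w k * ys k $ i * ys k $ j) - (\<Sum>k<nq. w k * ys k $ i) * (\<Sum>k<nq. w k * ys k $ j))"
      unfolding vec_eq_iff using hess_ell[OF nq, where f=f and xq="\<lambda>i. xq i \<omega>" and th=th] by (simp add: w_def ys_def)
    have "specnorm (hessian (ell f (\<lambda>i. xp i \<omega>) np (\<lambda>i. xq i \<omega>) nq) th) \<le> 2 * (Cratio * Dmax2)"
      unfolding specnorm_def H
    proof (rule onorm_le)
      fix x
      have c0: "0 \<le> Cratio * Dmax2" using Cpos D0 by simp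
      show "norm ((\<chi> i j. (\<Sum>k<nq. w k * ys k $ i * ys k $ j) - (\<Sum>k<nq. w k * ys k $ i) * (\<Sum>k<nq. w k * ys k $ j)) *v x)
        \<le> 2 * (Cratio * Dmax2) * norm x"
        by (rule mat_bound[OF w0 w1 c0 q])
    qed
    then show "specnorm (hessian (ell f (\<lambda>i. xp i \<omega>) np (\<lambda>i. xq i \<omega>) nq) (thetas + \<delta>)) \<le> 2 * Cratio * Dmax2"
      by (simp add: th_def mult.assoc)
  qed
qed

end
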